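(* Let $N\ge1$ and $n\ge N$ be integers and let $P(t_1,\dots,t_n)$ be a symmetric polynomial with complex coefficients such that $P(x,\dots,x,t_1,\dots,t_{n-N-1})=0$ identically, where $x$ is repeated $N+1$ times. Then the polynomial $P(x,\dots,x,t_1,\dots,t_{n-N})$ (with $x$ repeated $N$ times) is divisible by $\prod_{j=1}^{n-N}(t_j-x)^2$. *)

theory Defs
  imports Complex_Main "HOL-Library.Poly_Mapping" "HOL-Combinatorics.Permutations"
begin

text \<open>Multiplication is the convolution product from Poly_Mapping, so this type
  is the commutative ring of complex polynomials and dvd is polynomial divisibility.\<close>

type_synonym mpoly = "(nat \<Rightarrow>\<^sub>0 nat) \<Rightarrow>\<^sub>0 complex"

definition Var :: "nat \<Rightarrow> mpoly" where
  "Var i = Poly_Mapping.single (Poly_Mapping.single i 1) 1"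

definition Const :: "complex \<Rightarrow> mpoly" where
  "Const c = Poly_Mapping.single 0 c"

definition subst :: "(nat \<Rightarrow> mpoly) \<Rightarrow> mpoly \<Rightarrow> mpoly" where
  "subst s p = (\<Sum>m\<in>Poly_Mapping.keys p.
      Const (Poly_Mapping.lookup p m) * (\<Prod>i\<in>Poly_Mapping.keys m. s i ^ Poly_Mapping.lookup m i))"

text \<open>p only involves the variables 0,...,n-1 (playing the role of t_1..t_n).\<close>
definition vars_below :: "nat \<Rightarrow> mpoly \<Rightarrow> bool" where
  "vars_below n p \<longleftrightarrow> (\<forall>m\<in>Poly_Mapping.keys p. Poly_Mapping.keys m \<subseteq> {..<n})"

definition symmetric_poly :: "nat \<Rightarrow> mpoly \<Rightarrow> bool" where
  "symmetric_poly n p \<longleftrightarrow>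
     (\<forall>\<pi>. \<pi> permutes {..<n} \<longrightarrow> subst (\<lambda>i. Var (\<pi> i)) p = p)"

text \<open>The specialization P(x,...,x,t_1,...,t_{n-k}) with x repeated k times:
  in the result, x is variable 0 and t_j is variable j.  Original variable i<k
  goes to x, variable i\<ge>k goes to t_{i-k+1}.\<close>
definition specialize :: "nat \<Rightarrow> mpoly \<Rightarrow> mpoly" where
  "specialize k p = subst (\<lambda>i. if i < k then Var 0 else Var (i - k + 1)) p"

end

theory Submission imports Defs begin

lemma Const_0[simp]: "Const 0 = 0" by (simp add: Const_def)
lemma Const_1[simp]: "Const 1 = 1" by (simp add: Const_def)
lemma Const_add: "Const (a+b) = Const a + Const b" by (simp add: Const_def single_add)
lemma Const_mult: "Const a * Const b = Const (a*b)" by (simp add: Const_def mult_single)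
lemma Const_mult_single: "Const c * Poly_Mapping.single m d = Poly_Mapping.single m (c*d)"
  by (simp add: Const_def mult_single)

lemma mpoly_expand: "(p::'a \<Rightarrow>\<^sub>0 'b::comm_monoid_add) = (\<Sum>m\<in>Poly_Mapping.keys p. Poly_Mapping.single m (Poly_Mapping.lookup p m))"
proof (rule poly_mapping_eqI)
  fix k
  have "(\<Sum>m\<in>Poly_Mapping.keys p. Poly_Mapping.lookup (Poly_Mapping.single m (Poly_Mapping.lookup p m)) k)
     = (\<Sum>m\<in>Poly_Mapping.keys p. if m = k then Poly_Mapping.lookup p m else 0)"
    by (intro sum.cong) (auto simp: lookup_single)
  also have "\<dots> = Poly_Mapping.lookup p k"
    by (auto simp: sum.delta in_keys_iff)
  finally show "Poly_Mapping.lookup p k = Poly_Mapping.lookup (\<Sum>m\<in>Poly_Mapping.keys p. Poly_Mapping.single m (Poly_Mapping.lookup p m)) k"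
    by (simp add: lookup_sum)
qed

definition mev :: "(nat \<Rightarrow> mpoly) \<Rightarrow> (nat \<Rightarrow>\<^sub>0 nat) \<Rightarrow> mpoly" where
  "mev s m = (\<Prod>i\<in>Poly_Mapping.keys m. s i ^ Poly_Mapping.lookup m i)"

lemma mev_superset:
  assumes "finite A" "Poly_Mapping.keys m \<subseteq> A"
  shows "mev s m = (\<Prod>i\<in>A. s i ^ Poly_Mapping.lookup m i)"
  unfolding mev_def
  by (rule prod.mono_neutral_left) (use assms in \<open>auto simp: in_keys_iff\<close>)

lemma mev_add: "mev s (a + b) = mev s a * mev s b"
proof -
  let ?A = "Poly_Mapping.keys a \<union> Poly_Mapping.keys b"
  have "mev s (a+b) = (\<Prod>i\<in>?A. s i ^ Poly_Mapping.lookup (a+b) i)"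
    by (rule mev_superset) (auto simp: keys_add)
  also have "\<dots> = (\<Prod>i\<in>?A. s i ^ Poly_Mapping.lookup a i) * (\<Prod>i\<in>?A. s i ^ Poly_Mapping.lookup b i)"
    by (simp add: lookup_add power_add prod.distrib)
  also have "\<dots> = mev s a * mev s b"
    by (subst (1 2) mev_superset[symmetric]) auto
  finally show ?thesis .
qed

lemma mev_zero[simp]: "mev s 0 = 1" by (simp add: mev_def)

lemma mev_single1[simp]: "mev s (Poly_Mapping.single i 1) = s i"
  unfolding mev_def by simp

lemma subst_superset:
  assumes "finite A" "Poly_Mapping.keys p \<subseteq> A"
  shows "subst s p = (\<Sum>m\<in>A. Const (Poly_Mapping.lookup p m) * mev s m)"
  unfolding subst_def mev_def[symmetric]
  by (rule sum.mono_neutral_left) (use assms in \<open>auto simp: in_keys_iff\<close>)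

lemma subst_0[simp]: "subst s 0 = 0" by (simp add: subst_def)

lemma subst_add: "subst s (p + q) = subst s p + subst s q"
proof -
  let ?A = "Poly_Mapping.keys p \<union> Poly_Mapping.keys q"
  have "subst s (p+q) = (\<Sum>m\<in>?A. Const (Poly_Mapping.lookup (p+q) m) * mev s m)"
    by (rule subst_superset) (auto simp: keys_add)
  also have "\<dots> = (\<Sum>m\<in>?A. Const (Poly_Mapping.lookup p m) * mev s m) + (\<Sum>m\<in>?A. Const (Poly_Mapping.lookup q m) * mev s m)"
    by (simp add: lookup_add Const_add distrib_right sum.distrib)
  also have "\<dots> = subst s p + subst s q"
    by (subst (1 2) subst_superset[symmetric]) auto
  finally show ?thesis .
qed

lemma subst_sum: "subst s (sum f A) = (\<Sum>a\<in>A. subst s (f a))"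
  by (induction A rule: infinite_finite_induct) (auto simp: subst_add)

lemma subst_single: "subst s (Poly_Mapping.single m c) = Const c * mev s m"
proof (cases "c = 0")
  case True then show ?thesis by simp
next
  case False
  then show ?thesis by (simp add: subst_def mev_def)
qed

lemma subst_mult: "subst s (p * q) = subst s p * subst s q"
proof -
  let ?sp = "\<lambda>a. Poly_Mapping.single a (Poly_Mapping.lookup p a)"
  let ?sq = "\<lambda>b. Poly_Mapping.single b (Poly_Mapping.lookup q b)"
  have "p * q = (\<Sum>a\<in>Poly_Mapping.keys p. ?sp a) * (\<Sum>b\<in>Poly_Mapping.keys q. ?sq b)"
    by (rule arg_cong2[where f="(*)"]; rule mpoly_expand)
  also have "\<dots> = (\<Sum>a\<in>Poly_Mapping.keys p. \<Sum>b\<in>Poly_Mapping.keys q. ?sp a * ?sq b)"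
    by (rule sum_product)
  finally have pq: "p * q = \<dots>" .
  have "subst s (p*q) = (\<Sum>a\<in>Poly_Mapping.keys p. \<Sum>b\<in>Poly_Mapping.keys q. subst s (?sp a) * subst s (?sq b))"
  proof -
    have "subst s (?sp a * ?sq b) = subst s (?sp a) * subst s (?sq b)" for a b
    proof -
      have "subst s (?sp a * ?sq b) = Const (Poly_Mapping.lookup p a) * Const (Poly_Mapping.lookup q b) * (mev s a * mev s b)"
        by (simp add: mult_single subst_single mev_add Const_mult)
      then show ?thesis by (simp add: subst_single mult_ac)
    qed
    then show ?thesis by (simp add: pq subst_sum)
  qed
  also have "\<dots> = subst s (\<Sum>a\<in>Poly_Mapping.keys p. ?sp a) * subst s (\<Sum>b\<in>Poly_Mapping.keys q. ?sq b)"
    by (simp add: subst_sum sum_product)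
  also have "\<dots> = subst s p * subst s q"
    by (simp only: mpoly_expand[symmetric])
  finally show ?thesis .
qed

lemma subst_Const[simp]: "subst s (Const c) = Const c"
  by (simp add: Const_def subst_single)

lemma subst_1[simp]: "subst s 1 = 1"
  using subst_Const[of s 1] by simp

lemma subst_Var[simp]: "subst s (Var i) = s i"
  by (simp add: Var_def subst_single mev_def)

lemma subst_uminus: "subst s (- p) = - subst s p"
  by (metis add_eq_0_iff2 subst_0 subst_add)

lemma subst_diff: "subst s (p - q) = subst s p - subst s q"
  unfolding diff_conv_add_uminus subst_add subst_uminus ..

lemma subst_power: "subst s (p ^ k) = subst s p ^ k"
  by (induction k) (simp_all add: subst_mult)

lemma subst_prod: "subst s (prod f A) = (\<Prod>a\<in>A. subst s (f a))"
  by (induction A rule: infinite_finite_induct) (auto simp: subst_mult)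

lemma subst_of_nat: "subst s (of_nat k) = of_nat k"
  by (induction k) (simp_all add: subst_add)

lemma mev_subst: "subst s (mev t m) = mev (\<lambda>i. subst s (t i)) m"
  by (simp add: mev_def subst_prod subst_power)

lemma subst_subst: "subst s (subst t p) = subst (\<lambda>i. subst s (t i)) p"
proof -
  have "subst s (subst t p) = (\<Sum>m\<in>Poly_Mapping.keys p. Const (Poly_Mapping.lookup p m) * subst s (mev t m))"
    unfolding subst_def[of t] mev_def[symmetric] by (simp add: subst_sum subst_mult)
  also have "\<dots> = subst (\<lambda>i. subst s (t i)) p"
    unfolding subst_def[of "\<lambda>i. subst s (t i)"] mev_def[symmetric] by (simp add: mev_subst)
  finally show ?thesis .
qed

lemma Var_power: "Var i ^ e = Poly_Mapping.single (Poly_Mapping.single i e) 1"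
  by (induction e) (simp_all add: Var_def mult_single flip: single_add)

lemma prod_single1: "(\<Prod>i\<in>A. Poly_Mapping.single (f i) (1::complex)) = Poly_Mapping.single (\<Sum>i\<in>A. f i) 1"
  by (induction A rule: infinite_finite_induct) (simp_all add: mult_single)

lemma mev_Var: "mev Var m = Poly_Mapping.single m 1"
proof -
  have "mev Var m = Poly_Mapping.single (\<Sum>i\<in>Poly_Mapping.keys m. Poly_Mapping.single i (Poly_Mapping.lookup m i)) 1"
    by (simp add: mev_def Var_power prod_single1)
  also have "\<dots> = Poly_Mapping.single m 1" by (simp flip: mpoly_expand)
  finally show ?thesis .
qed

lemma single_as_mev: "Poly_Mapping.single m c = Const c * mev Var m"
  by (simp add: mev_Var Const_mult_single)

lemma subst_Var_id: "subst Var p = p"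
  unfolding subst_def by (subst (2) mpoly_expand) (simp add: single_as_mev flip: mev_def)

lemma mev_cong: "(\<And>i. i \<in> Poly_Mapping.keys m \<Longrightarrow> s i = t i) \<Longrightarrow> mev s m = mev t m"
  unfolding mev_def by (rule prod.cong) auto

lemma subst_cong: "vars_below K p \<Longrightarrow> (\<And>i. i < K \<Longrightarrow> s i = t i) \<Longrightarrow> subst s p = subst t p"
  unfolding subst_def vars_below_def
  apply (rule sum.cong[OF refl], rule arg_cong[where f="(*) _"], rule prod.cong[OF refl])
  by (fastforce simp: subset_iff)

lemma mpoly_induct[consumes 1, case_names Const Var add mult]:
  assumes vb: "vars_below K p"
    and C: "\<And>c. Q (Const c)" and V: "\<And>i. i < K \<Longrightarrow> Q (Var i)"
    and A: "\<And>p q. Q p \<Longrightarrow> Q q \<Longrightarrow> Q (p + q)"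
    and M: "\<And>p q. Q p \<Longrightarrow> Q q \<Longrightarrow> Q (p * q)"
  shows "Q p"
proof -
  have sumQ: "(\<And>a. a \<in> S \<Longrightarrow> Q (f a)) \<Longrightarrow> Q (sum f S)" for f and S :: "'x set"
  proof (induction S rule: infinite_finite_induct)
    case (infinite A) then show ?case using C[of 0] by simp
  next
    case empty then show ?case using C[of 0] by simp
  next
    case (insert x F) then show ?case by (simp add: A)
  qed
  have prodQ: "(\<And>a. a \<in> S \<Longrightarrow> Q (f a)) \<Longrightarrow> Q (prod f S)" for f and S :: "'x set"
  proof (induction S rule: infinite_finite_induct)
    case (infinite A) then show ?case using C[of 1] by simp
  next
    case empty then show ?case using C[of 1] by simp
  next
    case (insert x F) then show ?case by (simp add: M)
  qed
  have powQ: "Q x \<Longrightarrow> Q (x ^ e)" for x e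
    by (induction e) (use C[of 1] M in auto)
  have "p = (\<Sum>m\<in>Poly_Mapping.keys p. Const (Poly_Mapping.lookup p m) * mev Var m)"
    by (subst mpoly_expand) (simp add: single_as_mev)
  also have "Q \<dots>"
  proof (rule sumQ)
    fix m assume m: "m \<in> Poly_Mapping.keys p"
    have "Q (mev Var m)"
      unfolding mev_def
      by (rule prodQ, rule powQ, rule V) (use vb m in \<open>auto simp: vars_below_def\<close>)
    then show "Q (Const (Poly_Mapping.lookup p m) * mev Var m)" by (rule M[OF C])
  qed
  finally show ?thesis .
qed

definition deriv :: "nat \<Rightarrow> mpoly \<Rightarrow> mpoly" where
  "deriv k p = Abs_poly_mapping (\<lambda>m. of_nat (Poly_Mapping.lookup m k + 1) * Poly_Mapping.lookup p (m + Poly_Mapping.single k 1))"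

lemma lookup_deriv:
  "Poly_Mapping.lookup (deriv k p) m = of_nat (Poly_Mapping.lookup m k + 1) * Poly_Mapping.lookup p (m + Poly_Mapping.single k 1)"
proof -
  have inj: "inj (\<lambda>m::nat\<Rightarrow>\<^sub>0nat. m + Poly_Mapping.single k 1)" by (auto intro: injI)
  have "finite ((\<lambda>m. m + Poly_Mapping.single k 1) -` Poly_Mapping.keys p)"
    by (rule finite_vimageI[OF finite_keys inj])
  then have "finite {m. of_nat (Poly_Mapping.lookup m k + 1) * Poly_Mapping.lookup p (m + Poly_Mapping.single k 1) \<noteq> (0::complex)}"
    by (rule rev_finite_subset) (auto simp: in_keys_iff)
  then show ?thesis by (simp add: deriv_def)
qed

lemma deriv_add: "deriv k (p + q) = deriv k p + deriv k q"
  by (rule poly_mapping_eqI) (simp add: lookup_deriv lookup_add distrib_left)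

lemma deriv_0[simp]: "deriv k 0 = 0"
  by (rule poly_mapping_eqI) (simp add: lookup_deriv)

lemma deriv_sum: "deriv k (sum f A) = (\<Sum>a\<in>A. deriv k (f a))"
  by (induction A rule: infinite_finite_induct) (simp_all add: deriv_add)

lemma deriv_uminus: "deriv k (- p) = - deriv k p"
  by (rule poly_mapping_eqI) (simp add: lookup_deriv)

lemma deriv_diff: "deriv k (p - q) = deriv k p - deriv k q"
  by (rule poly_mapping_eqI) (simp add: lookup_deriv lookup_minus right_diff_distrib)

lemma deriv_single:
  "deriv k (Poly_Mapping.single m c) =
     (if Poly_Mapping.lookup m k = 0 then 0
      else Poly_Mapping.single (m - Poly_Mapping.single k 1) (of_nat (Poly_Mapping.lookup m k) * c))"
proof (rule poly_mapping_eqI)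
  fix m0
  show "Poly_Mapping.lookup (deriv k (Poly_Mapping.single m c)) m0 = Poly_Mapping.lookup (if Poly_Mapping.lookup m k = 0 then 0
      else Poly_Mapping.single (m - Poly_Mapping.single k 1) (of_nat (Poly_Mapping.lookup m k) * c)) m0"
  proof (cases "m = m0 + Poly_Mapping.single k 1")
    case True
    have "m - Poly_Mapping.single k 1 = m0" by (simp add: True)
    then show ?thesis by (simp add: lookup_deriv True lookup_add)
  next
    case False
    have ne: "m - Poly_Mapping.single k 1 \<noteq> m0" if "Poly_Mapping.lookup m k \<noteq> 0"
    proof
      assume h: "m - Poly_Mapping.single k 1 = m0"
      have "m = m0 + Poly_Mapping.single k 1"
        by (rule poly_mapping_eqI) (use that in \<open>auto simp: h[symmetric] lookup_add lookup_minus lookup_single when_def\<close>)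
      with False show False by simp
    qed
    show ?thesis using False ne
      by (auto simp: lookup_deriv lookup_single when_def)
  qed
qed

lemma deriv_Const[simp]: "deriv k (Const c) = 0"
  by (simp add: Const_def deriv_single)

lemma deriv_1[simp]: "deriv k 1 = 0"
  using deriv_Const[of k 1] by simp

lemma deriv_Var: "deriv k (Var j) = (if j = k then 1 else 0)"
  by (simp add: Var_def deriv_single lookup_single when_def)

lemma deriv_Var_same[simp]: "deriv k (Var k) = 1" by (simp add: deriv_Var)

lemma deriv_single_mult:
  "deriv k (Poly_Mapping.single a c * Poly_Mapping.single b d) =
    deriv k (Poly_Mapping.single a c) * Poly_Mapping.single b d + Poly_Mapping.single a c * deriv k (Poly_Mapping.single b d)"
proof -
  let ?d = "Poly_Mapping.single k (Suc 0)"
  have e1: "b + (a - ?d) = a + b - ?d" if "Poly_Mapping.lookup a k \<noteq> 0"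
    by (rule poly_mapping_eqI) (use that in \<open>auto simp: lookup_add lookup_minus lookup_single when_def\<close>)
  have e2: "a + (b - ?d) = a + b - ?d" if "Poly_Mapping.lookup b k \<noteq> 0"
    by (rule poly_mapping_eqI) (use that in \<open>auto simp: lookup_add lookup_minus lookup_single when_def\<close>)
  show ?thesis
    by (cases "Poly_Mapping.lookup a k = 0"; cases "Poly_Mapping.lookup b k = 0")
       (simp_all add: mult_single deriv_single lookup_add e1 e2 single_add algebra_simps)
qed

lemma deriv_mult: "deriv k (p * q) = deriv k p * q + p * deriv k q"
proof -
  let ?sp = "\<lambda>a. Poly_Mapping.single a (Poly_Mapping.lookup p a)"
  let ?sq = "\<lambda>b. Poly_Mapping.single b (Poly_Mapping.lookup q b)"
  have P: "p = (\<Sum>a\<in>Poly_Mapping.keys p. ?sp a)" and Q: "q = (\<Sum>b\<in>Poly_Mapping.keys q. ?sq b)"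
    by (rule mpoly_expand)+
  have "deriv k (p * q) = deriv k ((\<Sum>a\<in>Poly_Mapping.keys p. ?sp a) * (\<Sum>b\<in>Poly_Mapping.keys q. ?sq b))"
    using P Q by (metis (no_types, lifting))
  also have "\<dots> = (\<Sum>a\<in>Poly_Mapping.keys p. \<Sum>b\<in>Poly_Mapping.keys q.
        deriv k (?sp a) * ?sq b + ?sp a * deriv k (?sq b))"
    by (simp add: sum_product deriv_sum deriv_single_mult)
  also have "\<dots> = deriv k (\<Sum>a\<in>Poly_Mapping.keys p. ?sp a) * (\<Sum>b\<in>Poly_Mapping.keys q. ?sq b)
      + (\<Sum>a\<in>Poly_Mapping.keys p. ?sp a) * deriv k (\<Sum>b\<in>Poly_Mapping.keys q. ?sq b)"
    by (simp add: sum_product deriv_sum sum.distrib)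
  also have "\<dots> = deriv k p * q + p * deriv k q"
    using P Q by (metis (no_types, lifting))
  finally show ?thesis .
qed

lemma chain_rule:
  assumes "vars_below K p"
  shows "deriv i (subst s p) = (\<Sum>j<K. subst s (deriv j p) * deriv i (s j))"
  using assms
proof (induction rule: mpoly_induct)
  case (Const c) then show ?case by simp
next
  case (Var l)
  have "(\<Sum>j<K. subst s (deriv j (Var l)) * deriv i (s j)) = (\<Sum>j<K. if j = l then deriv i (s j) else 0)"
    by (rule sum.cong) (auto simp: deriv_Var)
  also have "\<dots> = deriv i (s l)" using Var by simp
  finally show ?case by simp
next
  case (add p q) then show ?case
    by (simp add: subst_add deriv_add distrib_right sum.distrib)
next
  case (mult p q) then show ?case
    by (simp add: subst_mult deriv_mult subst_add distrib_right sum.distrib sum_distrib_left sum_distrib_right algebra_simps)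
qed

definition kill :: "nat \<Rightarrow> nat \<Rightarrow> mpoly" where
  "kill k = (\<lambda>j. if j = k then 0 else Var j)"

lemma subst_kill_single:
  "subst (kill k) (Poly_Mapping.single m c) = (if Poly_Mapping.lookup m k = 0 then Poly_Mapping.single m c else 0)"
proof (cases "Poly_Mapping.lookup m k = 0")
  case True
  have "mev (kill k) m = mev Var m"
    by (rule mev_cong) (use True in \<open>auto simp: kill_def in_keys_iff\<close>)
  then show ?thesis using True by (simp add: subst_single mev_Var Const_mult_single)
next
  case False
  have "mev (kill k) m = 0"
    unfolding mev_def
    by (rule prod_zero) (use False in \<open>auto simp: kill_def in_keys_iff intro!: bexI[of _ k]\<close>)
  then show ?thesis using False by (simp add: subst_single)
qed

lemma lookup_kill:
  assumes "Poly_Mapping.lookup m0 k = 0"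
  shows "Poly_Mapping.lookup (subst (kill k) p) m0 = Poly_Mapping.lookup p m0"
proof -
  have "Poly_Mapping.lookup (subst (kill k) p) m0 =
     (\<Sum>m\<in>Poly_Mapping.keys p. Poly_Mapping.lookup (subst (kill k) (Poly_Mapping.single m (Poly_Mapping.lookup p m))) m0)"
    by (subst mpoly_expand) (simp add: subst_sum lookup_sum)
  also have "\<dots> = (\<Sum>m\<in>Poly_Mapping.keys p. if m = m0 then Poly_Mapping.lookup p m else 0)"
    by (rule sum.cong) (use assms in \<open>auto simp: subst_kill_single lookup_single when_def\<close>)
  also have "\<dots> = Poly_Mapping.lookup p m0"
    by (auto simp: sum.delta in_keys_iff)
  finally show ?thesis .
qed

lemma two_le_exp:
  assumes "subst (kill k) U = 0" "subst (kill k) (deriv k U) = 0" "m \<in> Poly_Mapping.keys U"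
  shows "2 \<le> Poly_Mapping.lookup m k"
proof (rule ccontr)
  assume "\<not> 2 \<le> Poly_Mapping.lookup m k"
  then consider "Poly_Mapping.lookup m k = 0" | "Poly_Mapping.lookup m k = 1" by linarith
  then show False
  proof cases
    case 1
    then have "Poly_Mapping.lookup U m = 0" using lookup_kill[OF 1, of U] assms(1) by simp
    with assms(3) show False by (simp add: in_keys_iff)
  next
    case 2
    define m0 where "m0 = m - Poly_Mapping.single k 1"
    have m0k: "Poly_Mapping.lookup m0 k = 0" using 2 by (simp add: m0_def lookup_minus)
    have mm: "m0 + Poly_Mapping.single k 1 = m"
      by (rule poly_mapping_eqI) (use 2 in \<open>auto simp: m0_def lookup_add lookup_minus lookup_single when_def\<close>)
    have "Poly_Mapping.lookup (deriv k U) m0 = 0" using lookup_kill[OF m0k, of "deriv k U"] assms(2) by simp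
    then have "Poly_Mapping.lookup U (m0 + Poly_Mapping.single k 1) = 0" by (simp add: lookup_deriv m0k)
    then have "Poly_Mapping.lookup U m = 0" by (simp only: mm)
    with assms(3) show False by (simp add: in_keys_iff)
  qed
qed

lemma monomial_dvd:
  assumes "finite K" "\<And>m k. m \<in> Poly_Mapping.keys U \<Longrightarrow> k \<in> K \<Longrightarrow> 2 \<le> Poly_Mapping.lookup m k"
  shows "(\<Prod>k\<in>K. Var k ^ 2) dvd U"
proof -
  define D where "D = (\<Sum>k\<in>K. Poly_Mapping.single k (2::nat))"
  have lD: "Poly_Mapping.lookup D i = (if i \<in> K then 2 else 0)" for i
    using assms(1) by (simp add: D_def lookup_sum lookup_single when_def)
  have prodD: "(\<Prod>k\<in>K. Var k ^ 2) = Poly_Mapping.single D 1"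
    by (simp add: Var_power prod_single1 D_def)
  have mD: "D + (m - D) = m" if "m \<in> Poly_Mapping.keys U" for m
    by (rule poly_mapping_eqI) (use assms(2)[OF that] in \<open>auto simp: lD lookup_add lookup_minus\<close>)
  have "U = (\<Sum>m\<in>Poly_Mapping.keys U. Poly_Mapping.single m (Poly_Mapping.lookup U m))"
    by (rule mpoly_expand)
  also have "\<dots> = (\<Sum>m\<in>Poly_Mapping.keys U. Poly_Mapping.single D 1 * Poly_Mapping.single (m - D) (Poly_Mapping.lookup U m))"
    by (rule sum.cong) (auto simp: mult_single mD)
  also have "\<dots> = (\<Prod>k\<in>K. Var k ^ 2) * (\<Sum>m\<in>Poly_Mapping.keys U. Poly_Mapping.single (m - D) (Poly_Mapping.lookup U m))"
    by (simp add: prodD sum_distrib_left)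
  finally show ?thesis by (rule dvdI)
qed

lemma deriv_perm:
  assumes vb: "vars_below n P" and sym: "symmetric_poly n P" and j: "j < n" and i: "i < n"
  shows "deriv j P = subst (\<lambda>l. Var (transpose j i l)) (deriv i P)"
proof -
  have perm: "transpose j i permutes {..<n}" using i j by (intro permutes_swap_id) auto
  have eqP: "subst (\<lambda>l. Var (transpose j i l)) P = P" using sym perm by (simp add: symmetric_poly_def)
  have "deriv j P = deriv j (subst (\<lambda>l. Var (transpose j i l)) P)" by (simp add: eqP)
  also have "\<dots> = (\<Sum>l<n. subst (\<lambda>l. Var (transpose j i l)) (deriv l P) * deriv j (Var (transpose j i l)))"
    by (rule chain_rule[OF vb])
  also have "\<dots> = (\<Sum>l<n. if l = i then subst (\<lambda>l. Var (transpose j i l)) (deriv i P) else 0)"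
    by (rule sum.cong) (auto simp: deriv_Var transpose_def)
  also have "\<dots> = subst (\<lambda>l. Var (transpose j i l)) (deriv i P)" using i by simp
  finally show ?thesis .
qed

theorem proposition3:
  fixes N n :: nat and P :: mpoly
  assumes "N \<ge> 1" and "n \<ge> N"
    and "vars_below n P"
    and "symmetric_poly n P"
    and "N < n \<longrightarrow> specialize (N + 1) P = 0"
  shows "(\<Prod>j\<in>{1..n - N}. (Var j - Var 0) ^ 2) dvd specialize N P"
proof (cases "N < n")
  case False
  then have "n - N = 0" by simp
  then show ?thesis by simp
next
  case True
  note vb = assms(3) and sym = assms(4)
  have spec0: "specialize (N + 1) P = 0" using True assms(5) by simp
  define \<mu> where "\<mu> l = (if l < N then Var 0 else Var 0 + Var (Suc l))" for l
  define \<nu> where "\<nu> i l = (if l < N \<or> l = i then Var 0 else Var 0 + Var (Suc l))" for i l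
  define U where "U = subst \<mu> P"
  have W0: "subst (\<nu> N) P = 0"
  proof -
    define \<rho> where "\<rho> j = (if j = 0 then Var 0 else Var 0 + Var (j + N + 1))" for j
    have fe: "(\<lambda>l. subst \<rho> (if l < N + 1 then Var 0 else Var (l - (N + 1) + 1))) = \<nu> N"
      by (rule ext) (auto simp: \<rho>_def \<nu>_def)
    have "subst \<rho> (specialize (N + 1) P) = subst (\<nu> N) P"
      unfolding specialize_def subst_subst fe by (rule refl)
    then have "subst (\<nu> N) P = subst \<rho> (specialize (N + 1) P)" by simp
    then show ?thesis using spec0 by simp
  qed
  have W: "subst (\<nu> i) P = 0" if i: "N \<le> i" "i < n" for i
  proof -
    have perm: "transpose i N permutes {..<n}" using i True by (intro permutes_swap_id) auto
    have eqP: "subst (\<lambda>l. Var (transpose i N l)) P = P" using sym perm by (simp add: symmetric_poly_def)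
    have fe: "(\<lambda>l. \<nu> i (transpose i N l)) = (\<lambda>l. subst (\<lambda>j. Var (transpose (Suc i) (Suc N) j)) (\<nu> N l))"
      by (rule ext) (use i in \<open>auto simp: \<nu>_def transpose_def subst_add\<close>)
    have "subst (\<nu> i) P = subst (\<nu> i) (subst (\<lambda>l. Var (transpose i N l)) P)" by (simp add: eqP)
    also have "\<dots> = subst (\<lambda>j. Var (transpose (Suc i) (Suc N) j)) (subst (\<nu> N) P)"
      by (simp add: subst_subst fe)
    finally show ?thesis by (simp add: W0)
  qed
  have B: "subst (\<nu> i) (deriv i P) = 0" if i: "N \<le> i" "i < n" for i
  proof -
    define S where "S = insert i {..<N}"
    have S_sub: "S \<subseteq> {..<n}" using i by (auto simp: S_def)
    have cardS: "card S = N + 1" using i by (simp add: S_def)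
    have a: "(\<Sum>l<n. subst (\<nu> i) (deriv l P)) = 0"
    proof -
      have "deriv 0 (subst (\<nu> i) P) = (\<Sum>l<n. subst (\<nu> i) (deriv l P) * deriv 0 (\<nu> i l))"
        by (rule chain_rule[OF vb])
      also have "\<dots> = (\<Sum>l<n. subst (\<nu> i) (deriv l P))"
        by (rule sum.cong) (auto simp: \<nu>_def deriv_add deriv_Var)
      finally show ?thesis using W[OF i] by simp
    qed
    have b: "subst (\<nu> i) (deriv l P) = 0" if l: "l < n" "l \<notin> S" for l
    proof -
      have "deriv (Suc l) (subst (\<nu> i) P) = (\<Sum>l'<n. subst (\<nu> i) (deriv l' P) * deriv (Suc l) (\<nu> i l'))"
        by (rule chain_rule[OF vb])
      also have "\<dots> = (\<Sum>l'<n. if l' = l then subst (\<nu> i) (deriv l P) else 0)"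
        by (rule sum.cong) (use l in \<open>auto simp: \<nu>_def deriv_add deriv_Var S_def\<close>)
      also have "\<dots> = subst (\<nu> i) (deriv l P)" using l by simp
      finally show ?thesis using W[OF i] by simp
    qed
    have c: "subst (\<nu> i) (deriv l P) = subst (\<nu> i) (deriv i P)" if l: "l \<in> S" for l
    proof -
      have ln: "l < n" using l S_sub by auto
      have fe: "(\<lambda>j. \<nu> i (transpose l i j)) = \<nu> i"
        by (rule ext) (use l in \<open>auto simp: \<nu>_def transpose_def S_def\<close>)
      show ?thesis
        by (simp add: deriv_perm[OF vb sym ln i(2)] subst_subst fe)
    qed
    have "0 = (\<Sum>l<n. subst (\<nu> i) (deriv l P))" using a by simp
    also have "\<dots> = (\<Sum>l\<in>S. subst (\<nu> i) (deriv l P))"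
      by (rule sum.mono_neutral_right) (use S_sub b in auto)
    also have "\<dots> = (\<Sum>l\<in>S. subst (\<nu> i) (deriv i P))"
      by (rule sum.cong) (simp_all add: c)
    also have "\<dots> = of_nat (N + 1) * subst (\<nu> i) (deriv i P)"
      by (simp add: cardS)
    finally have "of_nat (N + 1) * subst (\<nu> i) (deriv i P) = 0" by simp
    moreover have "of_nat (N + 1) \<noteq> (0::mpoly)" by (simp only: of_nat_eq_0_iff)
    ultimately show ?thesis by (metis mult_eq_0_iff)
  qed
  have exp2: "2 \<le> Poly_Mapping.lookup m k" if m: "m \<in> Poly_Mapping.keys U" and k: "k \<in> {Suc N..n}" for m k
  proof -
    define i where "i = k - 1"
    have i: "N \<le> i" "i < n" and ki: "k = Suc i" using k by (auto simp: i_def)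
    have fe: "(\<lambda>l. subst (kill (Suc i)) (\<mu> l)) = \<nu> i"
      by (rule ext) (use i in \<open>auto simp: \<mu>_def \<nu>_def kill_def subst_add\<close>)
    have k1: "subst (kill (Suc i)) U = 0"
      by (simp add: U_def subst_subst fe W[OF i])
    have "deriv (Suc i) U = (\<Sum>l<n. subst \<mu> (deriv l P) * deriv (Suc i) (\<mu> l))"
      unfolding U_def by (rule chain_rule[OF vb])
    also have "\<dots> = (\<Sum>l<n. if l = i then subst \<mu> (deriv i P) else 0)"
      by (rule sum.cong) (use i in \<open>auto simp: \<mu>_def deriv_add deriv_Var\<close>)
    also have "\<dots> = subst \<mu> (deriv i P)" using i by simp
    finally have dU: "deriv (Suc i) U = subst \<mu> (deriv i P)" .
    have k2: "subst (kill (Suc i)) (deriv (Suc i) U) = 0"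
      by (simp add: dU subst_subst fe B[OF i])
    show ?thesis unfolding ki by (rule two_le_exp[OF k1 k2 m])
  qed
  have Mdvd: "(\<Prod>k\<in>{Suc N..n}. Var k ^ 2) dvd U"
    by (rule monomial_dvd) (auto intro: exp2)
  define \<omega> where "\<omega> j = (if j = 0 then Var 0 else Var (j - N) - Var 0)" for j
  have fe7: "(\<lambda>l. subst \<omega> (\<mu> l)) = (\<lambda>i. if i < N then Var 0 else Var (i - N + 1))"
    by (rule ext) (auto simp: \<omega>_def \<mu>_def subst_add Suc_diff_le)
  have specU: "specialize N P = subst \<omega> U"
    by (simp add: U_def specialize_def subst_subst fe7)
  have dv: "subst \<omega> (\<Prod>k\<in>{Suc N..n}. Var k ^ 2) dvd specialize N P"
    using Mdvd unfolding specU by (auto simp: dvd_def subst_mult)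
  have "subst \<omega> (\<Prod>k\<in>{Suc N..n}. Var k ^ 2) = (\<Prod>k\<in>{Suc N..n}. (Var (k - N) - Var 0) ^ 2)"
    by (simp add: subst_prod subst_power \<omega>_def)
  also have "\<dots> = (\<Prod>j\<in>{1..n - N}. (Var j - Var 0) ^ 2)"
    by (rule prod.reindex_bij_witness[of _ "\<lambda>j. j + N" "\<lambda>k. k - N"]) auto
  finally show ?thesis using dv by simp
qed

end
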